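(* Let $R$ be a skew field, $a_1,\dots,a_4\in R^*$, $A_i=a_ia_{i+1}a_{i+2}a_{i+3}$ (indices mod $4$) with $1+A_i\ne0$ for all $i$, and define $$b_1=(1+A_3^{-1})a_3,\quad b_2=(1+A_4)^{-1}a_4,\quad b_3=(1+A_1^{-1})a_1,\quad b_4=(1+A_2)^{-1}a_2,$$ and $B_i=b_ib_{i+1}b_{i+2}b_{i+3}$. Then for all $i\in\mathbb Z/4\mathbb Z$: $$b_ib_{i+1}=(a_ia_{i+1})^{-1},\qquad A_i=B_{i+2}^{-1}.$$ *)

theory Defs
  imports Main
begin

text \<open>Cyclic products of four elements of a (possibly non-commutative) division ring,
indices taken mod 4.  Indices are 0-based: the paper's a_1,...,a_4 are a 1, a 2, a 3, a 0
(equivalently a k for any k, read mod 4).\<close>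

definition cyc4 :: "(nat \<Rightarrow> 'a::division_ring) \<Rightarrow> nat \<Rightarrow> 'a" where
  "cyc4 a i = a (i mod 4) * a ((i + 1) mod 4) * a ((i + 2) mod 4) * a ((i + 3) mod 4)"

end

theory Submission
  imports Defs
begin

lemma L1:
  fixes x :: "'a::division_ring"
  assumes "x \<noteq> 0" "1 + x \<noteq> 0"
  shows "(1 + inverse x) * inverse (1 + x) = inverse x"
proof -
  have "1 + inverse x = inverse x * (1 + x)" using assms by (simp add: distrib_left)
  then show ?thesis using assms by (simp add: mult.assoc)
qed

lemma L2:
  fixes x :: "'a::division_ring"
  assumes "x \<noteq> 0" "1 + x \<noteq> 0"
  shows "inverse (1 + x) * (1 + inverse x) = inverse x"
proof -
  have "1 + inverse x = (1 + x) * inverse x" using assms by (simp add: distrib_right)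
  then show ?thesis using assms by (simp flip: mult.assoc)
qed

lemma shiftL:
  fixes c u v :: "'a::division_ring"
  assumes "c * u = v * c" "u \<noteq> 0" "v \<noteq> 0"
  shows "c * inverse u = inverse v * c"
proof -
  have "inverse v * c = inverse v * c * (u * inverse u)" using assms by simp
  also have "\<dots> = inverse v * (c * u) * inverse u" by (simp add: mult.assoc)
  also have "\<dots> = (inverse v * v) * c * inverse u" using assms(1) by (simp add: mult.assoc)
  also have "\<dots> = c * inverse u" using assms by simp
  finally show ?thesis by simp
qed

lemma shiftP:
  fixes c u v :: "'a::division_ring"
  assumes "c * (1 + u) = (1 + v) * c" "1 + u \<noteq> 0" "1 + v \<noteq> 0"
  shows "c * inverse (1 + u) = inverse (1 + v) * c"
  using shiftL[OF assms] .

lemma shiftI: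
  fixes c u v :: "'a::division_ring"
  assumes "c * u = v * c" "u \<noteq> 0" "v \<noteq> 0"
  shows "c * (1 + inverse u) = (1 + inverse v) * c"
  using shiftL[OF assms] by (simp add: distrib_left distrib_right)

lemma pairA:
  fixes x y :: "'a::division_ring"
  assumes "x \<noteq> 0" "1 + x \<noteq> 0" "y \<noteq> 0" "1 + y \<noteq> 0" "c * (1 + y) = (1 + x) * c"
  shows "(1 + inverse x) * c * (inverse (1 + y) * d) = inverse x * c * d"
proof -
  have "(1 + inverse x) * c * (inverse (1 + y) * d) = (1 + inverse x) * (c * inverse (1 + y)) * d"
    by (simp add: mult.assoc)
  also have "\<dots> = (1 + inverse x) * inverse (1 + x) * c * d"
    using shiftP[OF assms(5) assms(4) assms(2)] by (simp add: mult.assoc)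
  also have "\<dots> = inverse x * c * d" using L1[OF assms(1,2)] by simp
  finally show ?thesis .
qed

lemma pairB:
  fixes x y :: "'a::division_ring"
  assumes "x \<noteq> 0" "1 + x \<noteq> 0" "y \<noteq> 0" "c * y = x * c"
  shows "inverse (1 + x) * c * ((1 + inverse y) * d) = inverse x * c * d"
proof -
  have "inverse (1 + x) * c * ((1 + inverse y) * d) = inverse (1 + x) * (c * (1 + inverse y)) * d"
    by (simp add: mult.assoc)
  also have "\<dots> = inverse (1 + x) * (1 + inverse x) * c * d"
    using shiftI[OF assms(4) assms(3) assms(1)] by (simp add: mult.assoc)
  also have "\<dots> = inverse x * c * d" using L2[OF assms(1,2)] by simp
  finally show ?thesis .
qed

lemma md: "(0::nat) mod 4 = 0" "(0+1::nat) mod 4 = 1" "(0+2::nat) mod 4 = 2" "(0+3::nat) mod 4 = 3"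
 "(1::nat) mod 4 = 1" "(1+1::nat) mod 4 = 2" "(1+2::nat) mod 4 = 3" "(1+3::nat) mod 4 = 0"
 "(2::nat) mod 4 = 2" "(2+1::nat) mod 4 = 3" "(2+2::nat) mod 4 = 0" "(2+3::nat) mod 4 = 1"
 "(3::nat) mod 4 = 3" "(3+1::nat) mod 4 = 0" "(3+2::nat) mod 4 = 1" "(3+3::nat) mod 4 = 2"
 "(4::nat) mod 4 = 0" "(4+1::nat) mod 4 = 1" "(4+2::nat) mod 4 = 2" "(4+3::nat) mod 4 = 3"
  by simp_all

lemma invpair:
  fixes a b c d :: "'a::division_ring"
  assumes "a \<noteq> 0" "b \<noteq> 0" "c \<noteq> 0" "d \<noteq> 0"
  shows "a * b * c * d = inverse (inverse (c * d) * inverse (a * b))"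
proof -
  have "inverse (inverse (c * d) * inverse (a * b)) = inverse (inverse (a * b)) * inverse (inverse (c * d))"
    using assms by (simp add: nonzero_inverse_mult_distrib)
  also have "\<dots> = a * b * (c * d)" by simp
  finally show ?thesis by (simp add: mult.assoc)
qed

theorem lemma4p4:
  fixes a b :: "nat \<Rightarrow> 'a::division_ring"
  assumes nz: "\<And>i. i < 4 \<Longrightarrow> a i \<noteq> 0"
    and nA: "\<And>i. 1 + cyc4 a i \<noteq> 0"
    and b1: "b 1 = (1 + inverse (cyc4 a 3)) * a 3"
    and b2: "b 2 = inverse (1 + cyc4 a 4) * a (4 mod 4)"
    and b3: "b 3 = (1 + inverse (cyc4 a 1)) * a 1"
    and b4: "b (4 mod 4) = inverse (1 + cyc4 a 2) * a 2"
  shows "\<forall>i. b (i mod 4) * b ((i + 1) mod 4) = inverse (a (i mod 4) * a ((i + 1) mod 4))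
            \<and> cyc4 a i = inverse (cyc4 b (i + 2))"
proof -
  have n0: "a 0 \<noteq> 0" and n1: "a 1 \<noteq> 0" and n2: "a 2 \<noteq> 0" and n3: "a 3 \<noteq> 0" using nz by auto
  have c0: "cyc4 a 0 = a 0 * a 1 * a 2 * a 3" by (simp only: cyc4_def md)
  have c1: "cyc4 a 1 = a 1 * a 2 * a 3 * a 0" by (simp only: cyc4_def md)
  have c2: "cyc4 a 2 = a 2 * a 3 * a 0 * a 1" by (simp only: cyc4_def md)
  have c3: "cyc4 a 3 = a 3 * a 0 * a 1 * a 2" by (simp only: cyc4_def md)
  have c4: "cyc4 a 4 = cyc4 a 0" by (simp only: cyc4_def md)
  have h0: "1 + a 0 * a 1 * a 2 * a 3 \<noteq> 0" using nA[of 0] c0 by simp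
  have h1: "1 + a 1 * a 2 * a 3 * a 0 \<noteq> 0" using nA[of 1] c1 by simp
  have h2: "1 + a 2 * a 3 * a 0 * a 1 \<noteq> 0" using nA[of 2] c2 by simp
  have h3: "1 + a 3 * a 0 * a 1 * a 2 \<noteq> 0" using nA[of 3] c3 by simp
  have B0: "b 0 = inverse (1 + a 2 * a 3 * a 0 * a 1) * a 2" using b4 c2 by simp
  have B1: "b 1 = (1 + inverse (a 3 * a 0 * a 1 * a 2)) * a 3" using b1 c3 by simp
  have B2: "b 2 = inverse (1 + a 0 * a 1 * a 2 * a 3) * a 0" using b2 c4 c0 by simp
  have B3: "b 3 = (1 + inverse (a 1 * a 2 * a 3 * a 0)) * a 1" using b3 c1 by simp
  have p12: "b 1 * b 2 = inverse (a 1 * a 2)"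
  proof -
    have "b 1 * b 2 = inverse (a 3 * a 0 * a 1 * a 2) * a 3 * a 0"
      unfolding B1 B2
      by (rule pairA) (use n0 n1 n2 n3 h0 h3 in \<open>auto simp: distrib_left distrib_right mult.assoc\<close>)
    also have "\<dots> = inverse (a 1 * a 2)" using n0 n1 n2 n3
      by (simp add: nonzero_inverse_mult_distrib mult.assoc)
    finally show ?thesis .
  qed
  have p30: "b 3 * b 0 = inverse (a 3 * a 0)"
  proof -
    have "b 3 * b 0 = inverse (a 1 * a 2 * a 3 * a 0) * a 1 * a 2"
      unfolding B3 B0
      by (rule pairA) (use n0 n1 n2 n3 h1 h2 in \<open>auto simp: distrib_left distrib_right mult.assoc\<close>)
    also have "\<dots> = inverse (a 3 * a 0)" using n0 n1 n2 n3
      by (simp add: nonzero_inverse_mult_distrib mult.assoc)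
    finally show ?thesis .
  qed
  have p23: "b 2 * b 3 = inverse (a 2 * a 3)"
  proof -
    have "b 2 * b 3 = inverse (a 0 * a 1 * a 2 * a 3) * a 0 * a 1"
      unfolding B2 B3
      by (rule pairB) (use n0 n1 n2 n3 h0 in \<open>auto simp: mult.assoc\<close>)
    also have "\<dots> = inverse (a 2 * a 3)" using n0 n1 n2 n3
      by (simp add: nonzero_inverse_mult_distrib mult.assoc)
    finally show ?thesis .
  qed
  have p01: "b 0 * b 1 = inverse (a 0 * a 1)"
  proof -
    have "b 0 * b 1 = inverse (a 2 * a 3 * a 0 * a 1) * a 2 * a 3"
      unfolding B0 B1
      by (rule pairB) (use n0 n1 n2 n3 h2 in \<open>auto simp: mult.assoc\<close>)
    also have "\<dots> = inverse (a 0 * a 1)" using n0 n1 n2 n3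
      by (simp add: nonzero_inverse_mult_distrib mult.assoc)
    finally show ?thesis .
  qed
  have cb0: "cyc4 b 2 = (b 2 * b 3) * (b 0 * b 1)" by (simp only: cyc4_def md mult.assoc)
  have cb1: "cyc4 b 3 = (b 3 * b 0) * (b 1 * b 2)" by (simp only: cyc4_def md mult.assoc)
  have cb2: "cyc4 b 0 = (b 0 * b 1) * (b 2 * b 3)" by (simp only: cyc4_def md mult.assoc)
  have cb3: "cyc4 b 1 = (b 1 * b 2) * (b 3 * b 0)" by (simp only: cyc4_def md mult.assoc)
  have q0: "cyc4 a 0 = inverse (cyc4 b 2)" unfolding cb0 p23 p01 c0 by (rule invpair[OF n0 n1 n2 n3])
  have q1: "cyc4 a 1 = inverse (cyc4 b 3)" unfolding cb1 p30 p12 c1 by (rule invpair[OF n1 n2 n3 n0])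
  have q2: "cyc4 a 2 = inverse (cyc4 b 0)" unfolding cb2 p01 p23 c2 by (rule invpair[OF n2 n3 n0 n1])
  have q3: "cyc4 a 3 = inverse (cyc4 b 1)" unfolding cb3 p12 p30 c3 by (rule invpair[OF n3 n0 n1 n2])
  have ca: "cyc4 a j = cyc4 a (j mod 4)" for j
  proof -
    have t: "(j mod 4 + t) mod 4 = (j + t) mod 4" for t :: nat by (simp add: mod_add_left_eq)
    show ?thesis by (simp only: cyc4_def t mod_mod_trivial)
  qed
  have cbm: "cyc4 b j = cyc4 b (j mod 4)" for j
  proof -
    have t: "(j mod 4 + t) mod 4 = (j + t) mod 4" for t :: nat by (simp add: mod_add_left_eq)
    show ?thesis by (simp only: cyc4_def t mod_mod_trivial)
  qed
  show ?thesis
  proof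
    fix i :: nat
    define k where "k = i mod 4"
    have k4: "k = 0 \<or> k = 1 \<or> k = 2 \<or> k = 3" unfolding k_def by arith
    have e1: "(i + 1) mod 4 = (k + 1) mod 4" unfolding k_def by (rule mod_add_left_eq[symmetric])
    have e2: "cyc4 b (i + 2) = cyc4 b ((k + 2) mod 4)" unfolding k_def mod_add_left_eq by (rule cbm)
    have e3: "cyc4 a i = cyc4 a k" using ca[of i] unfolding k_def .
    show "b (i mod 4) * b ((i + 1) mod 4) = inverse (a (i mod 4) * a ((i + 1) mod 4))
            \<and> cyc4 a i = inverse (cyc4 b (i + 2))"
      unfolding e1 e2 e3 k_def[symmetric]
      using k4 by (elim disjE; hypsubst; simp only: md p01 p12 p23 p30 q0 q1 q2 q3 simp_thms)
  qed
qed

end
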